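(* Let $\mathcal{B}$ be a building set on $[d]$ that is $\triangle$-closed, i.e. for all $I,J\in\mathcal{B}$ with $I\not\subseteq J$, $J\not\subseteq I$ and $I\cap J\neq\emptyset$ one has $I\triangle J\in\mathcal{B}$. Then the nestohedron $\Delta_{\mathcal{B}}$ is inscribed.
   Context: A building set is a collection $\mathcal{B}$ of subsets of $[d]$ such that $I\cap J\neq\emptyset$ implies $I\cup J\in\mathcal{B}$ for all $I,J\in\mathcal{B}$. $I\triangle J=(I\setminus J)\cup(J\setminus I)$. For $I\subseteq[d]$, $\Delta_I=\mathrm{conv}(e_i:i\in I)$ and $\Delta_{\mathcal{B}}=\sum_{I\in\mathcal{B}}\Delta_I$ (Minkowski sum). A polytope is inscribed if all its vertices lie on a common sphere. *)

theory Defs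
  imports "HOL-Analysis.Analysis"
begin

text \<open>Ground set [d] is modelled as the finite type 'n (d = CARD('n)); R^d is real^'n.\<close>

definition building_set :: "'n set set \<Rightarrow> bool" where
  "building_set B \<longleftrightarrow> (\<forall>I\<in>B. \<forall>J\<in>B. I \<inter> J \<noteq> {} \<longrightarrow> I \<union> J \<in> B)"

definition symdiff_closed :: "'n set set \<Rightarrow> bool" where
  "symdiff_closed B \<longleftrightarrow> (\<forall>I\<in>B. \<forall>J\<in>B. \<not> I \<subseteq> J \<and> \<not> J \<subseteq> I \<and> I \<inter> J \<noteq> {}
      \<longrightarrow> (I - J) \<union> (J - I) \<in> B)"

definition simplex_face :: "'n::finite set \<Rightarrow> (real^'n) set" where
  "simplex_face I = convex hull ((\<lambda>i. axis i 1) ` I)"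

definition nestohedron :: "'n::finite set set \<Rightarrow> (real^'n) set" where
  "nestohedron B = {(\<Sum>I\<in>B. x I) | x. \<forall>I\<in>B. x I \<in> simplex_face I}"

definition inscribed :: "'a::euclidean_space set \<Rightarrow> bool" where
  "inscribed P \<longleftrightarrow> (\<exists>c r. \<forall>v. v extreme_point_of P \<longrightarrow> dist c v = r)"

end

theory Submission
  imports Defs
begin

definition gg :: "('n set \<Rightarrow> 'n) \<Rightarrow> 'n set \<Rightarrow> 'n set \<Rightarrow> real" where
  "gg m I J = of_bool (m I = m J) - of_bool (m J \<in> I) - of_bool (m I \<in> J)"

definition goodm :: "'n set set \<Rightarrow> ('n set \<Rightarrow> 'n) \<Rightarrow> bool" where
  "goodm B m \<longleftrightarrow> (\<forall>I\<in>B. m I \<in> I) \<and> (\<forall>I\<in>B. \<forall>L\<in>B. I \<subseteq> L \<longrightarrow> m L \<in> I \<longrightarrow> m I = m L)"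

definition SS :: "'n set set \<Rightarrow> ('n set \<times> 'n set) set" where
  "SS B = {(I,J). I \<in> B \<and> J \<in> B \<and> \<not> I \<subseteq> J \<and> \<not> J \<subseteq> I \<and> I \<inter> J \<noteq> {}}"

lemma gg_sym: "gg m I J = gg m J I"
  unfolding gg_def by auto

lemma triangle:
  assumes bs: "building_set B" and sc: "symdiff_closed B" and gm: "goodm B m"
    and IJ: "(I,J) \<in> SS B"
  shows "gg m I J + gg m I ((I - J) \<union> (J - I)) + gg m ((I - J) \<union> (J - I)) J = -2"
proof -
  let ?K = "(I - J) \<union> (J - I)"
  have I: "I \<in> B" and J: "J \<in> B" and nij: "\<not> I \<subseteq> J" "\<not> J \<subseteq> I" "I \<inter> J \<noteq> {}"
    using IJ by (auto simp: SS_def)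
  have K: "?K \<in> B" using sc I J nij unfolding symdiff_closed_def by simp
  have L: "I \<union> J \<in> B" using bs I J nij unfolding building_set_def by simp
  have g1: "\<forall>I\<in>B. m I \<in> I" and g2: "\<forall>I\<in>B. \<forall>L\<in>B. I \<subseteq> L \<longrightarrow> m L \<in> I \<longrightarrow> m I = m L"
    using gm unfolding goodm_def by (blast, blast)
  have mI: "m I \<in> I" using g1 I by blast
  have mJ: "m J \<in> J" using g1 J by blast
  have mK: "m ?K \<in> ?K" using g1 K by (rule bspec)
  have mL: "m (I \<union> J) \<in> I \<union> J" using g1 L by (rule bspec)
  have PI: "m (I \<union> J) \<in> I \<Longrightarrow> m I = m (I \<union> J)"
    using g2[rule_format, OF I L] by blast
  have PJ: "m (I \<union> J) \<in> J \<Longrightarrow> m J = m (I \<union> J)"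
    using g2[rule_format, OF J L] by blast
  have PK: "m (I \<union> J) \<in> ?K \<Longrightarrow> m ?K = m (I \<union> J)"
    using g2[rule_format, OF K L] by blast
  define t where "t = m (I \<union> J)"
  have c: "(t \<in> I \<and> t \<in> J) \<or> (t \<in> I \<and> t \<notin> J) \<or> (t \<notin> I \<and> t \<in> J)"
    using mL t_def by blast
  moreover have ?thesis if "t \<in> I" "t \<in> J"
  proof -
    have e: "m I = t" "m J = t" using PI PJ that t_def by auto
    have "t \<notin> ?K" using that by blast
    then have "m ?K \<noteq> t" using mK by metis
    moreover have "(m ?K \<in> I) \<noteq> (m ?K \<in> J)" using mK by blast
    ultimately show ?thesis using that unfolding gg_def e by (auto simp: of_bool_def)
  qed
  moreover have ?thesis if "t \<in> I" "t \<notin> J"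
  proof -
    have tk: "t \<in> ?K" using that by blast
    have e: "m I = t" "m ?K = t" using PI PK that tk t_def by auto
    have "m J \<noteq> t" using mJ that by metis
    moreover have "(m J \<in> I) \<noteq> (m J \<in> ?K)" using mJ by blast
    ultimately show ?thesis using that tk unfolding gg_def e by (auto simp: of_bool_def)
  qed
  moreover have ?thesis if "t \<notin> I" "t \<in> J"
  proof -
    have tk: "t \<in> ?K" using that by blast
    have e: "m J = t" "m ?K = t" using PJ PK that tk t_def by auto
    have "m I \<noteq> t" using mI that by metis
    moreover have "(m I \<in> J) \<noteq> (m I \<in> ?K)" using mI by blast
    ultimately show ?thesis using that tk unfolding gg_def e by (auto simp: of_bool_def)
  qed
  ultimately show ?thesis by blast
qed

lemma SS_phi1:
  assumes sc: "symdiff_closed B" and p: "(I,J) \<in> SS B"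
  shows "(I, (I - J) \<union> (J - I)) \<in> SS B"
proof -
  have I: "I \<in> B" and J: "J \<in> B" and nij: "\<not> I \<subseteq> J" "\<not> J \<subseteq> I" "I \<inter> J \<noteq> {}"
    using p by (auto simp: SS_def)
  have K: "(I - J) \<union> (J - I) \<in> B" using sc I J nij unfolding symdiff_closed_def by simp
  have a: "\<not> I \<subseteq> (I - J) \<union> (J - I)" using nij(3) by blast
  have b: "\<not> (I - J) \<union> (J - I) \<subseteq> I" using nij(2) by blast
  have c: "I \<inter> ((I - J) \<union> (J - I)) \<noteq> {}" using nij(1) by blast
  show ?thesis unfolding SS_def using I K a b c by simp
qed

lemma SS_phi2:
  assumes sc: "symdiff_closed B" and p: "(I,J) \<in> SS B"
  shows "((I - J) \<union> (J - I), J) \<in> SS B"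
proof -
  have I: "I \<in> B" and J: "J \<in> B" and nij: "\<not> I \<subseteq> J" "\<not> J \<subseteq> I" "I \<inter> J \<noteq> {}"
    using p by (auto simp: SS_def)
  have K: "(I - J) \<union> (J - I) \<in> B" using sc I J nij unfolding symdiff_closed_def by simp
  have a: "\<not> J \<subseteq> (I - J) \<union> (J - I)" using nij(3) by blast
  have b: "\<not> (I - J) \<union> (J - I) \<subseteq> J" using nij(1) by blast
  have c: "((I - J) \<union> (J - I)) \<inter> J \<noteq> {}" using nij(2) by blast
  show ?thesis unfolding SS_def using J K a b c by simp
qed

lemma sum_SS:
  fixes B :: "'n::finite set set"
  assumes bs: "building_set B" and sc: "symdiff_closed B" and gm: "goodm B m"
  shows "(\<Sum>p\<in>SS B. gg m (fst p) (snd p)) = -2/3 * real (card (SS B))"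
proof -
  let ?f = "\<lambda>p. gg m (fst p) (snd p)"
  define p1 where "p1 = (\<lambda>p::'n set \<times> 'n set. (fst p, (fst p - snd p) \<union> (snd p - fst p)))"
  define p2 where "p2 = (\<lambda>p::'n set \<times> 'n set. ((fst p - snd p) \<union> (snd p - fst p), snd p))"
  have fin: "finite (SS B)" by simp
  have m1: "p1 p \<in> SS B" if "p \<in> SS B" for p
    using SS_phi1[OF sc, of "fst p" "snd p"] that unfolding p1_def by simp
  have m2: "p2 p \<in> SS B" if "p \<in> SS B" for p
    using SS_phi2[OF sc, of "fst p" "snd p"] that unfolding p2_def by simp
  have i1: "p1 (p1 p) = p" for p unfolding p1_def by (cases p) auto
  have i2: "p2 (p2 p) = p" for p unfolding p2_def by (cases p) auto
  have b1: "bij_betw p1 (SS B) (SS B)"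
    by (rule bij_betw_byWitness[where f'=p1]) (use m1 i1 in auto)
  have b2: "bij_betw p2 (SS B) (SS B)"
    by (rule bij_betw_byWitness[where f'=p2]) (use m2 i2 in auto)
  have e1: "(\<Sum>p\<in>SS B. ?f (p1 p)) = (\<Sum>p\<in>SS B. ?f p)"
    using sum.reindex_bij_betw[OF b1, of ?f] by simp
  have e2: "(\<Sum>p\<in>SS B. ?f (p2 p)) = (\<Sum>p\<in>SS B. ?f p)"
    using sum.reindex_bij_betw[OF b2, of ?f] by simp
  have "(\<Sum>p\<in>SS B. ?f p + ?f (p1 p) + ?f (p2 p)) = (\<Sum>p\<in>SS B. -2)"
  proof (rule sum.cong[OF refl])
    fix p assume "p \<in> SS B"
    then show "?f p + ?f (p1 p) + ?f (p2 p) = -2"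
      using triangle[OF bs sc gm, of "fst p" "snd p"] unfolding p1_def p2_def by simp
  qed
  then have "3 * (\<Sum>p\<in>SS B. ?f p) = -2 * real (card (SS B))"
    using e1 e2 by (simp add: sum.distrib)
  then show ?thesis by simp
qed

definition KK :: "'n set set \<Rightarrow> real" where
  "KK B = (\<Sum>p\<in>B \<times> B - SS B. if fst p \<inter> snd p = {} then 0 else -1) - 2/3 * real (card (SS B))"

lemma sum_all:
  fixes B :: "'n::finite set set"
  assumes bs: "building_set B" and sc: "symdiff_closed B" and gm: "goodm B m"
  shows "(\<Sum>p\<in>B \<times> B. gg m (fst p) (snd p)) = KK B"
proof -
  have g1: "\<forall>I\<in>B. m I \<in> I" and g2: "\<forall>I\<in>B. \<forall>L\<in>B. I \<subseteq> L \<longrightarrow> m L \<in> I \<longrightarrow> m I = m L"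
    using gm unfolding goodm_def by (blast, blast)
  have sub: "SS B \<subseteq> B \<times> B" unfolding SS_def by auto
  have "(\<Sum>p\<in>B \<times> B. gg m (fst p) (snd p)) = (\<Sum>p\<in>B \<times> B - SS B. gg m (fst p) (snd p)) + (\<Sum>p\<in>SS B. gg m (fst p) (snd p))"
    by (rule sum.subset_diff[OF sub]) simp
  also have "(\<Sum>p\<in>B \<times> B - SS B. gg m (fst p) (snd p)) = (\<Sum>p\<in>B \<times> B - SS B. if fst p \<inter> snd p = {} then 0 else -1)"
  proof (rule sum.cong[OF refl])
    fix p assume p: "p \<in> B \<times> B - SS B"
    obtain I J where pe: "p = (I,J)" by (cases p)
    have I: "I \<in> B" and J: "J \<in> B" using p pe by auto
    have nS: "(I,J) \<notin> SS B" using p pe by simp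
    have mI: "m I \<in> I" using g1 I by blast
    have mJ: "m J \<in> J" using g1 J by blast
    have PIJ: "I \<subseteq> J \<Longrightarrow> m J \<in> I \<Longrightarrow> m I = m J" using g2[rule_format, OF I J] by blast
    have PJI: "J \<subseteq> I \<Longrightarrow> m I \<in> J \<Longrightarrow> m J = m I" using g2[rule_format, OF J I] by blast
    have "gg m I J = (if I \<inter> J = {} then 0 else -1)"
    proof (cases "I \<inter> J = {}")
      case True
      then have "m I \<notin> J" "m J \<notin> I" "m I \<noteq> m J" using mI mJ by auto
      then show ?thesis using True unfolding gg_def by simp
    next
      case False
      then have "I \<subseteq> J \<or> J \<subseteq> I" using nS I J unfolding SS_def by simp
      then show ?thesis
      proof
        assume s: "I \<subseteq> J"
        then have "m I \<in> J" using mI by auto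
        moreover have "(m I = m J) = (m J \<in> I)" using PIJ[OF s] mI by auto
        ultimately show ?thesis using False unfolding gg_def by simp
      next
        assume s: "J \<subseteq> I"
        then have "m J \<in> I" using mJ by auto
        moreover have "(m I = m J) = (m I \<in> J)" using PJI[OF s] mJ by auto
        ultimately show ?thesis using False unfolding gg_def by simp
      qed
    qed
    then show "gg m (fst p) (snd p) = (if fst p \<inter> snd p = {} then 0 else -1)" using pe by simp
  qed
  finally show ?thesis unfolding KK_def using sum_SS[OF bs sc gm] by simp
qed

lemma sum_upd:
  fixes x :: "'a \<Rightarrow> 'b::ab_group_add"
  assumes "finite B" "I \<in> B"
  shows "sum (x(I:=y)) B = sum x B - x I + y"
proof -
  have "sum (x(I:=y)) B = y + sum (x(I:=y)) (B - {I})"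
    using sum.remove[OF assms, of "x(I:=y)"] by simp
  also have "sum (x(I:=y)) (B - {I}) = sum x (B - {I})"
    by (rule sum.cong) auto
  also have "sum x (B - {I}) = sum x B - x I"
    using sum.remove[OF assms, of x] by simp
  finally show ?thesis by simp
qed

lemma extreme_rep:
  fixes B :: "'n::finite set set"
  assumes ve: "v extreme_point_of nestohedron B"
  shows "\<exists>m. goodm B m \<and> v = (\<Sum>I\<in>B. axis (m I) (1::real))"
proof -
  have fin: "finite B" by simp
  have vP: "v \<in> nestohedron B" and ext: "\<And>a b. a \<in> nestohedron B \<Longrightarrow> b \<in> nestohedron B \<Longrightarrow> v \<notin> open_segment a b"
    using ve unfolding extreme_point_of_def by auto
  obtain x where vx: "v = (\<Sum>I\<in>B. x I)" and xf: "\<forall>I\<in>B. x I \<in> simplex_face I"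
    using vP unfolding nestohedron_def by blast
  have memP: "sum y B \<in> nestohedron B" if "\<forall>I\<in>B. y I \<in> simplex_face I" for y
    using that unfolding nestohedron_def by blast
  have xe: "x I extreme_point_of simplex_face I" if I: "I \<in> B" for I
    unfolding extreme_point_of_def
  proof (intro conjI ballI)
    show "x I \<in> simplex_face I" using xf I by blast
    fix a b assume a: "a \<in> simplex_face I" and b: "b \<in> simplex_face I"
    show "x I \<notin> open_segment a b"
    proof
      assume xs: "x I \<in> open_segment a b"
      have pa: "sum (x(I:=a)) B \<in> nestohedron B" by (rule memP) (use xf a in auto)
      have pb: "sum (x(I:=b)) B \<in> nestohedron B" by (rule memP) (use xf b in auto)
      have ea: "sum (x(I:=a)) B = (v - x I) + a" using sum_upd[OF fin I, of x a] vx by simp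
      have eb: "sum (x(I:=b)) B = (v - x I) + b" using sum_upd[OF fin I, of x b] vx by simp
      have "(v - x I) + x I \<in> open_segment ((v - x I) + a) ((v - x I) + b)"
        unfolding open_segment_translation_eq by (rule xs)
      then have "v \<in> open_segment (sum (x(I:=a)) B) (sum (x(I:=b)) B)" using ea eb by simp
      then show False using ext pa pb by blast
    qed
  qed
  have "\<forall>I\<in>B. \<exists>i\<in>I. x I = axis i 1"
  proof
    fix I assume I: "I \<in> B"
    have "x I \<in> (\<lambda>i. axis i 1) ` I"
      using xe[OF I] extreme_point_of_convex_hull unfolding simplex_face_def by blast
    then show "\<exists>i\<in>I. x I = axis i 1" by auto
  qed
  then obtain m where mI: "\<forall>I\<in>B. m I \<in> I" and xm: "\<forall>I\<in>B. x I = axis (m I) 1"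
    by metis
  have vm: "v = (\<Sum>I\<in>B. axis (m I) (1::real))"
    unfolding vx by (rule sum.cong) (use xm in auto)
  have P2: "m I = m L" if I: "I \<in> B" and L: "L \<in> B" and IL: "I \<subseteq> L" and mLI: "m L \<in> I" for I L
  proof (rule ccontr)
    assume ne: "m I \<noteq> m L"
    then have IneL: "I \<noteq> L" by auto
    define ea where "ea = (axis (m L) 1 :: real^'n)"
    define eb where "eb = (axis (m I) 1 :: real^'n)"
    have abI: "m L \<in> I" "m I \<in> I" using mLI mI I by auto
    have fa: "ea \<in> simplex_face I" "ea \<in> simplex_face L" "eb \<in> simplex_face I" "eb \<in> simplex_face L"
      unfolding simplex_face_def ea_def eb_def using abI IL by (auto intro!: hull_inc)
    have pP: "sum (x(I:=ea, L:=ea)) B \<in> nestohedron B" by (rule memP) (use xf fa in auto)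
    have qP: "sum (x(I:=eb, L:=eb)) B \<in> nestohedron B" by (rule memP) (use xf fa in auto)
    have "sum (x(I:=ea, L:=ea)) B = sum (x(I:=ea)) B - x L + ea"
      using sum_upd[OF fin L, of "x(I:=ea)" ea] IneL by simp
    also have "\<dots> = v - x I + ea - x L + ea" using sum_upd[OF fin I, of x ea] vx by simp
    finally have pe: "sum (x(I:=ea, L:=ea)) B = v + (ea - eb)"
      using xm I L unfolding ea_def eb_def by simp
    have "sum (x(I:=eb, L:=eb)) B = sum (x(I:=eb)) B - x L + eb"
      using sum_upd[OF fin L, of "x(I:=eb)" eb] IneL by simp
    also have "\<dots> = v - x I + eb - x L + eb" using sum_upd[OF fin I, of x eb] vx by simp
    finally have qe: "sum (x(I:=eb, L:=eb)) B = v - (ea - eb)"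
      using xm I L unfolding ea_def eb_def by simp
    have "ea \<noteq> eb" unfolding ea_def eb_def using ne by (simp add: axis_eq_axis)
    then have neq: "v + (ea - eb) \<noteq> v - (ea - eb)"
    proof (intro notI)
      assume ne2: "ea \<noteq> eb" and h: "v + (ea - eb) = v - (ea - eb)"
      then have "(ea - eb) + (ea - eb) = 0" by (simp add: algebra_simps)
      then have "(2::real) *\<^sub>R (ea - eb) = 0" by (simp add: scaleR_2)
      then show False using ne2 by simp
    qed
    have mid: "midpoint (v + (ea - eb)) (v - (ea - eb)) = v"
      unfolding midpoint_def by (simp add: algebra_simps scaleR_2[symmetric] )
    have "v \<in> open_segment (v + (ea - eb)) (v - (ea - eb))"
      using midpoint_in_open_segment[of "v + (ea - eb)" "v - (ea - eb)"] neq mid by simp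
    then show False using ext pP qP pe qe by metis
  qed
  have "goodm B m" unfolding goodm_def using mI P2 by blast
  then show ?thesis using vm by blast
qed

lemma norm_formula:
  fixes B :: "'n::finite set set" and c :: "real^'n"
  assumes bs: "building_set B" and sc: "symdiff_closed B" and gm: "goodm B m"
    and cdef: "c = (\<chi> i. \<Sum>I\<in>B. of_bool (i \<in> I))"
    and vdef: "v = (\<Sum>I\<in>B. axis (m I) (1::real))"
  shows "(norm (v - c))^2 = inner c c + KK B"
proof -
  have vv: "inner v v = (\<Sum>I\<in>B. \<Sum>J\<in>B. of_bool (m I = m J))"
  proof -
    have ax: "inner (axis i (1::real)) (axis j (1::real) :: real^'n) = of_bool (i = j)" for i j
      by (simp add: inner_axis_axis)
    have "inner v v = (\<Sum>I\<in>B. \<Sum>J\<in>B. of_bool (m J = m I))"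
      unfolding vdef by (simp add: inner_sum_left inner_sum_right ax)
    also have "\<dots> = (\<Sum>I\<in>B. \<Sum>J\<in>B. of_bool (m I = m J))"
      by (intro sum.cong refl) auto
    finally show ?thesis .
  qed
  have vc: "inner v c = (\<Sum>J\<in>B. \<Sum>I\<in>B. of_bool (m J \<in> I))"
    unfolding vdef cdef by (simp add: inner_sum_left inner_axis')
  have "KK B = (\<Sum>p\<in>B \<times> B. gg m (fst p) (snd p))" using sum_all[OF bs sc gm] by simp
  also have "\<dots> = (\<Sum>I\<in>B. \<Sum>J\<in>B. gg m I J)"
    by (simp add: sum.cartesian_product split_beta)
  also have "\<dots> = (\<Sum>I\<in>B. \<Sum>J\<in>B. of_bool (m I = m J)) - (\<Sum>I\<in>B. \<Sum>J\<in>B. of_bool (m J \<in> I))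
      - (\<Sum>I\<in>B. \<Sum>J\<in>B. of_bool (m I \<in> J))"
    unfolding gg_def by (simp add: sum_subtractf)
  also have "(\<Sum>I\<in>B. \<Sum>J\<in>B. of_bool (m J \<in> I)) = inner v c"
    unfolding vc by (rule sum.swap)
  also have "(\<Sum>I\<in>B. \<Sum>J\<in>B. of_bool (m I \<in> J)) = inner v c"
    unfolding vc by simp
  finally have K: "KK B = inner v v - 2 * inner v c" using vv by simp
  have "(norm (v - c))^2 = inner (v - c) (v - c)" by (simp add: power2_norm_eq_inner)
  also have "\<dots> = inner v v - 2 * inner v c + inner c c"
    by (simp add: inner_diff_left inner_diff_right inner_commute)
  finally show ?thesis using K by simp
qed

theorem proposition4p22:
  fixes B :: "('n::finite) set set"
  assumes "building_set B"
    and "symdiff_closed B"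
  shows "inscribed (nestohedron B)"
proof -
  define c :: "real^'n" where "c = (\<chi> i. \<Sum>I\<in>B. of_bool (i \<in> I))"
  show ?thesis unfolding inscribed_def
  proof (intro exI allI impI)
    fix v assume "v extreme_point_of nestohedron B"
    then obtain m where gm: "goodm B m" and vm: "v = (\<Sum>I\<in>B. axis (m I) (1::real))"
      using extreme_rep by blast
    have "(norm (v - c))^2 = inner c c + KK B"
      using norm_formula[OF assms gm c_def vm] .
    then have "norm (v - c) = sqrt (inner c c + KK B)"
      by (metis norm_ge_zero real_sqrt_unique)
    then show "dist c v = sqrt (inner c c + KK B)"
      by (simp add: dist_norm norm_minus_commute)
  qed
qed

end
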